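(* Let $\mathcal T$ be a finite set of time steps and $X^{(t')}\in\mathbb{R}_{\ge0}^{m\times n}$ for $t'\in\mathcal T$, and let $\bar X=\sum_{t'\in\mathcal T}X^{(t')}$. For any $t\in\mathcal T$, let $p^{(t)}=X^{(t)}\mathbf 1_n$ and $q^{(t)}=(X^{(t)})^T\mathbf 1_m$. Then IPF (with zero-marginal handling) on $(\bar X,p^{(t)},q^{(t)})$ converges, i.e. the sequence of scaled matrices $\mathrm{diag}(d^0)\bar X\mathrm{diag}(d^1)$ converges to a matrix with row sums $p^{(t)}$ and column sums $q^{(t)}$.
   Context: IPF with zero-marginal handling on $(X,p,q)$, $X\in\mathbb{R}_{\ge0}^{m\times n}$, $p\in\mathbb{R}_{\ge0}^m$, $q\in\mathbb{R}_{\ge0}^n$, $\sum_ip_i=\sum_jq_j$: start with $d^0=\mathbf 1_m$, $d^1=\mathbf 1_n$; alternately update rows (for each $i$: $d^0_i\leftarrow0$ if $p_i=0$, else $d^0_i\leftarrow p_i/\sum_jX_{ij}d^1_j$) and columns (for each $j$: $d^1_j\leftarrow0$ if $q_j=0$, else $d^1_j\leftarrow q_j/\sum_iX_{ij}d^0_i$); after each update the scaled matrix is $\mathrm{diag}(d^0)X\mathrm{diag}(d^1)$. *)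

theory Defs
  imports Complex_Main
begin

text \<open>Matrices in R^{m x n} are represented as functions nat => nat => real, only the
entries with i < m, j < n being relevant; vectors as nat => real.\<close>

definition ipf_row_update ::
  "nat \<Rightarrow> (nat \<Rightarrow> nat \<Rightarrow> real) \<Rightarrow> (nat \<Rightarrow> real) \<Rightarrow> (nat \<Rightarrow> real) \<Rightarrow> (nat \<Rightarrow> real)" where
  "ipf_row_update n X p d1 =
     (\<lambda>i. if p i = 0 then 0 else p i / (\<Sum>j<n. X i j * d1 j))"

definition ipf_col_update ::
  "nat \<Rightarrow> (nat \<Rightarrow> nat \<Rightarrow> real) \<Rightarrow> (nat \<Rightarrow> real) \<Rightarrow> (nat \<Rightarrow> real) \<Rightarrow> (nat \<Rightarrow> real)" where
  "ipf_col_update m X q d0 =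
     (\<lambda>j. if q j = 0 then 0 else q j / (\<Sum>i<m. X i j * d0 i))"

fun ipf_scalings ::
  "nat \<Rightarrow> nat \<Rightarrow> (nat \<Rightarrow> nat \<Rightarrow> real) \<Rightarrow> (nat \<Rightarrow> real) \<Rightarrow> (nat \<Rightarrow> real) \<Rightarrow> nat
     \<Rightarrow> (nat \<Rightarrow> real) \<times> (nat \<Rightarrow> real)" where
  "ipf_scalings m n X p q 0 = ((\<lambda>_. 1), (\<lambda>_. 1))"
| "ipf_scalings m n X p q (Suc k) =
     (let (d0, d1) = ipf_scalings m n X p q k in
      if even k then (ipf_row_update n X p d1, d1)
      else (d0, ipf_col_update m X q d0))"

definition ipf_matrix ::
  "nat \<Rightarrow> nat \<Rightarrow> (nat \<Rightarrow> nat \<Rightarrow> real) \<Rightarrow> (nat \<Rightarrow> real) \<Rightarrow> (nat \<Rightarrow> real) \<Rightarrow> nat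
     \<Rightarrow> nat \<Rightarrow> nat \<Rightarrow> real" where
  "ipf_matrix m n X p q k =
     (\<lambda>i j. fst (ipf_scalings m n X p q k) i * X i j * snd (ipf_scalings m n X p q k) j)"

definition ipf_converges ::
  "nat \<Rightarrow> nat \<Rightarrow> (nat \<Rightarrow> nat \<Rightarrow> real) \<Rightarrow> (nat \<Rightarrow> real) \<Rightarrow> (nat \<Rightarrow> real) \<Rightarrow> bool" where
  "ipf_converges m n X p q \<longleftrightarrow>
     (\<exists>L. (\<forall>i<m. \<forall>j<n. (\<lambda>k. ipf_matrix m n X p q k i j) \<longlonglongrightarrow> L i j)
        \<and> (\<forall>i<m. (\<Sum>j<n. L i j) = p i)
        \<and> (\<forall>j<n. (\<Sum>i<m. L i j) = q j))"

end

theory Submission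
  imports Defs
begin

definition phi :: "real \<Rightarrow> real \<Rightarrow> real" where
  "phi x y = x * (ln x - ln y) - x + y"

lemma phi_zero[simp]: "phi 0 y = y" by (simp add: phi_def)
lemma phi_same[simp]: "phi x x = 0" by (simp add: phi_def)

lemma phi_ge:
  assumes "0 \<le> x" "0 \<le> y" "0 < x \<Longrightarrow> 0 < y"
  shows "(sqrt x - sqrt y)^2 \<le> phi x y"
proof (cases "x = 0")
  case True then show ?thesis using assms by (simp add: phi_def)
next
  case False
  then have x: "0 < x" using assms by simp
  then have y: "0 < y" using assms by simp
  define a where "a = sqrt x"
  define b where "b = sqrt y"
  have a: "0 < a" "a^2 = x" using x by (auto simp: a_def)
  have b: "0 < b" "b^2 = y" using y by (auto simp: b_def)
  have h1: "ln (b/a) \<le> b/a - 1" using a b by (intro ln_le_minus_one) auto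
  have h2: "ln (b/a) = ln b - ln a" using a b by (simp add: ln_divide_pos)
  have lx: "ln x = 2 * ln a" using a ln_realpow[of a 2] by simp
  have ly: "ln y = 2 * ln b" using b ln_realpow[of b 2] by simp
  have h3: "x * (1 - b/a) \<le> x * (ln a - ln b)"
    using h1 h2 x by (intro mult_left_mono) auto
  have h4': "a^2 * (1 - b/a) = a^2 - a*b" using a(1) by (simp add: field_simps power2_eq_square)
  have h4: "x * (1 - b/a) = x - a*b" using h4' a(2) by simp
  have "phi x y = 2 * (x * (ln a - ln b)) - x + y"
    unfolding phi_def lx ly by (simp add: algebra_simps)
  moreover have "(a - b)^2 = a^2 - 2*(a*b) + b^2" by (simp add: power2_diff)
  then have "(a - b)^2 = x - 2*(a*b) + y" using a(2) b(2) by simp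
  ultimately have "(a - b)^2 \<le> phi x y" using h3 h4 by linarith
  then show ?thesis by (simp add: a_def b_def)
qed

lemma phi_nonneg: "0 \<le> x \<Longrightarrow> 0 \<le> y \<Longrightarrow> (0 < x \<Longrightarrow> 0 < y) \<Longrightarrow> 0 \<le> phi x y"
  using phi_ge[of x y] by (meson order_trans zero_le_power2)

lemma sqrt_squeeze:
  fixes u e :: "nat \<Rightarrow> real"
  assumes "0 \<le> a" "\<And>k. 0 \<le> u k" "\<And>k. (sqrt a - sqrt (u k))^2 \<le> e k" "e \<longlonglongrightarrow> 0"
  shows "u \<longlonglongrightarrow> a"
proof -
  have b: "norm (sqrt (u k) - sqrt a) \<le> norm (sqrt (e k)) * 1" for k
  proof -
    have "sqrt ((sqrt a - sqrt (u k))^2) \<le> sqrt (e k)" using assms(3) real_sqrt_le_mono by blast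
    then have "\<bar>sqrt a - sqrt (u k)\<bar> \<le> sqrt (e k)" by (simp only: real_sqrt_abs)
    then show ?thesis by (simp add: abs_minus_commute)
  qed
  have "(\<lambda>k. sqrt (e k)) \<longlonglongrightarrow> sqrt 0" by (intro tendsto_intros assms(4))
  then have "(\<lambda>k. sqrt (e k)) \<longlonglongrightarrow> 0" by simp
  then have "(\<lambda>k. sqrt (u k) - sqrt a) \<longlonglongrightarrow> 0"
    by (rule tendsto_0_le[where K=1]) (rule always_eventually, rule allI, rule b)
  then have "(\<lambda>k. (sqrt (u k) - sqrt a) + sqrt a) \<longlonglongrightarrow> 0 + sqrt a" by (intro tendsto_intros)
  then have "(\<lambda>k. sqrt (u k)) \<longlonglongrightarrow> sqrt a" by simp
  then have "(\<lambda>k. (sqrt (u k))^2) \<longlonglongrightarrow> (sqrt a)^2" by (rule tendsto_power)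
  moreover have "(\<lambda>k. (sqrt (u k))^2) = u" using assms(2) by (simp add: fun_eq_iff)
  moreover have "(sqrt a)^2 = a" using assms(1) by simp
  ultimately show ?thesis by simp
qed

lemma finite_subseq:
  fixes u :: "nat \<Rightarrow> 'b \<Rightarrow> real"
  assumes "finite S" "\<And>k s. s \<in> S \<Longrightarrow> \<bar>u k s\<bar> \<le> M"
  shows "\<exists>\<sigma>. strict_mono \<sigma> \<and> (\<forall>s\<in>S. convergent (\<lambda>k. u (\<sigma> k) s))"
  using assms
proof (induction S rule: finite_induct)
  case empty
  show ?case by (intro exI[of _ id]) (auto simp: strict_mono_def)
next
  case (insert x S)
  then obtain \<sigma> where \<sigma>: "strict_mono \<sigma>" "\<forall>s\<in>S. convergent (\<lambda>k. u (\<sigma> k) s)" by auto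
  obtain f where f: "strict_mono f" "monoseq (\<lambda>k. u (\<sigma> (f k)) x)"
    using seq_monosub[of "\<lambda>k. u (\<sigma> k) x"] by auto
  have "Bseq (\<lambda>k. u (\<sigma> (f k)) x)"
    using insert.prems by (intro BseqI'[where K=M]) auto
  then have cx: "convergent (\<lambda>k. u (\<sigma> (f k)) x)" using f(2) Bseq_monoseq_convergent by blast
  have "convergent (\<lambda>k. u (\<sigma> (f k)) s)" if "s \<in> S" for s
    using convergent_subseq_convergent[OF \<sigma>(2)[rule_format, OF that] f(1)] by (simp add: o_def)
  moreover have "strict_mono (\<sigma> \<circ> f)" using \<sigma>(1) f(1) by (rule strict_mono_o)
  ultimately show ?case using cx
    by (intro exI[of _ "\<sigma> \<circ> f"]) (auto simp: o_def)
qed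


lemma double_sum_ge:
  fixes f :: "nat \<Rightarrow> nat \<Rightarrow> real"
  assumes "\<And>i j. i < m \<Longrightarrow> j < n \<Longrightarrow> 0 \<le> f i j" "i < m" "j < n"
  shows "f i j \<le> (\<Sum>i<m. \<Sum>j<n. f i j)"
proof -
  have "f i j \<le> (\<Sum>j<n. f i j)" using assms by (intro member_le_sum) auto
  also have "\<dots> \<le> (\<Sum>i<m. \<Sum>j<n. f i j)"
    using assms by (intro member_le_sum[where f="\<lambda>i. \<Sum>j<n. f i j"] sum_nonneg) auto
  finally show ?thesis .
qed

locale ipf =
  fixes m n :: nat and A Y :: "nat \<Rightarrow> nat \<Rightarrow> real"
  assumes Y_nonneg: "\<And>i j. i < m \<Longrightarrow> j < n \<Longrightarrow> 0 \<le> Y i j"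
    and Y_le: "\<And>i j. i < m \<Longrightarrow> j < n \<Longrightarrow> Y i j \<le> A i j"
begin

definition r where "r = (\<lambda>i. \<Sum>j<n. Y i j)"
definition c where "c = (\<lambda>j. \<Sum>i<m. Y i j)"
definition N where "N = (\<Sum>i<m. r i)"
definition d0 where "d0 k = fst (ipf_scalings m n A r c k)"
definition d1 where "d1 k = snd (ipf_scalings m n A r c k)"
definition B where "B k = ipf_matrix m n A r c k"

lemma B_eq: "B k i j = d0 k i * A i j * d1 k j"
  by (simp add: B_def ipf_matrix_def d0_def d1_def)

lemma d_0: "d0 0 = (\<lambda>_. 1)" "d1 0 = (\<lambda>_. 1)"
  by (simp_all add: d0_def d1_def)

lemma step_even: "even k \<Longrightarrow> d0 (Suc k) = ipf_row_update n A r (d1 k) \<and> d1 (Suc k) = d1 k"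
  by (simp add: d0_def d1_def case_prod_beta Let_def)

lemma step_odd: "odd k \<Longrightarrow> d0 (Suc k) = d0 k \<and> d1 (Suc k) = ipf_col_update m A c (d0 k)"
  by (simp add: d0_def d1_def case_prod_beta Let_def)

lemma A_nonneg: "i < m \<Longrightarrow> j < n \<Longrightarrow> 0 \<le> A i j"
  using Y_nonneg Y_le order_trans by blast

lemma r_nonneg: "0 \<le> r i" if "i < m"
  unfolding r_def using Y_nonneg that by (auto intro: sum_nonneg)

lemma c_nonneg: "0 \<le> c j" if "j < n"
  unfolding c_def using Y_nonneg that by (auto intro: sum_nonneg)

lemma Y_le_r: "i < m \<Longrightarrow> j < n \<Longrightarrow> Y i j \<le> r i"
  unfolding r_def using Y_nonneg by (intro member_le_sum) auto

lemma Y_le_c: "i < m \<Longrightarrow> j < n \<Longrightarrow> Y i j \<le> c j"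
  unfolding c_def using Y_nonneg by (intro member_le_sum) auto

lemma r_pos_ex: assumes "i < m" "0 < r i" shows "\<exists>j<n. 0 < Y i j"
proof (rule ccontr)
  assume "\<not> ?thesis"
  then have "r i \<le> 0" unfolding r_def by (intro sum_nonpos) auto
  with assms show False by simp
qed

lemma c_pos_ex: assumes "j < n" "0 < c j" shows "\<exists>i<m. 0 < Y i j"
proof (rule ccontr)
  assume "\<not> ?thesis"
  then have "c j \<le> 0" unfolding c_def by (intro sum_nonpos) auto
  with assms show False by simp
qed

lemma rowS_pos:
  assumes "i < m" "0 < r i" "\<And>j. j < n \<Longrightarrow> 0 \<le> e j" "\<And>j. j < n \<Longrightarrow> 0 < c j \<Longrightarrow> 0 < e j"
  shows "0 < (\<Sum>j<n. A i j * e j)"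
proof -
  obtain j where j: "j < n" "0 < Y i j" using r_pos_ex assms by blast
  have "0 < c j" using Y_le_c[of i j] j assms by simp
  then have "0 < A i j * e j" using assms j Y_le[of i j] by (intro mult_pos_pos) auto
  also have "\<dots> \<le> (\<Sum>j<n. A i j * e j)"
    using j assms A_nonneg by (intro member_le_sum) auto
  finally show ?thesis .
qed

lemma colS_pos:
  assumes "j < n" "0 < c j" "\<And>i. i < m \<Longrightarrow> 0 \<le> e i" "\<And>i. i < m \<Longrightarrow> 0 < r i \<Longrightarrow> 0 < e i"
  shows "0 < (\<Sum>i<m. A i j * e i)"
proof -
  obtain i where i: "i < m" "0 < Y i j" using c_pos_ex assms by blast
  have "0 < r i" using Y_le_r[of i j] i assms by simp
  then have "0 < A i j * e i" using assms i Y_le[of i j] by (intro mult_pos_pos) auto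
  also have "\<dots> \<le> (\<Sum>i<m. A i j * e i)"
    using i assms A_nonneg by (intro member_le_sum) auto
  finally show ?thesis .
qed

lemma inv: "(\<forall>i<m. 0 \<le> d0 k i \<and> (0 < r i \<longrightarrow> 0 < d0 k i)) \<and>
            (\<forall>j<n. 0 \<le> d1 k j \<and> (0 < c j \<longrightarrow> 0 < d1 k j))"
proof (induction k)
  case 0 then show ?case by (simp add: d_0)
next
  case (Suc k)
  show ?case
  proof (cases "even k")
    case True
    have "0 \<le> d0 (Suc k) i \<and> (0 < r i \<longrightarrow> 0 < d0 (Suc k) i)" if i: "i < m" for i
    proof -
      have S: "0 \<le> (\<Sum>j<n. A i j * d1 k j)"
        using Suc.IH A_nonneg i by (intro sum_nonneg mult_nonneg_nonneg) auto
      have "0 < r i \<Longrightarrow> 0 < (\<Sum>j<n. A i j * d1 k j)"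
        using Suc.IH i by (intro rowS_pos) auto
      then show ?thesis using S r_nonneg[OF i] step_even[OF True]
        by (auto simp: ipf_row_update_def)
    qed
    then show ?thesis using Suc.IH step_even[OF True] by auto
  next
    case False
    have "0 \<le> d1 (Suc k) j \<and> (0 < c j \<longrightarrow> 0 < d1 (Suc k) j)" if j: "j < n" for j
    proof -
      have S: "0 \<le> (\<Sum>i<m. A i j * d0 k i)"
        using Suc.IH A_nonneg j by (intro sum_nonneg mult_nonneg_nonneg) auto
      have "0 < c j \<Longrightarrow> 0 < (\<Sum>i<m. A i j * d0 k i)"
        using Suc.IH j by (intro colS_pos) auto
      then show ?thesis using S c_nonneg[OF j] step_odd[OF False]
        by (auto simp: ipf_col_update_def)
    qed
    then show ?thesis using Suc.IH step_odd[OF False] by auto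
  qed
qed

lemma d0_nonneg: "i < m \<Longrightarrow> 0 \<le> d0 k i" using inv by blast
lemma d0_pos: "i < m \<Longrightarrow> 0 < r i \<Longrightarrow> 0 < d0 k i" using inv by blast
lemma d1_nonneg: "j < n \<Longrightarrow> 0 \<le> d1 k j" using inv by blast
lemma d1_pos: "j < n \<Longrightarrow> 0 < c j \<Longrightarrow> 0 < d1 k j" using inv by blast

lemma B_nonneg: "i < m \<Longrightarrow> j < n \<Longrightarrow> 0 \<le> B k i j"
  by (simp add: B_eq A_nonneg d0_nonneg d1_nonneg)

definition rho where "rho k i = (\<Sum>j<n. B k i j)"
definition sig where "sig k j = (\<Sum>i<m. B k i j)"

lemma rho_eq: "rho k i = d0 k i * (\<Sum>j<n. A i j * d1 k j)"
  by (simp add: rho_def B_eq sum_distrib_left mult.assoc)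

lemma sig_eq: "sig k j = d1 k j * (\<Sum>i<m. A i j * d0 k i)"
  by (simp add: sig_def B_eq sum_distrib_left mult_ac)

lemma rho_nonneg: "i < m \<Longrightarrow> 0 \<le> rho k i"
  unfolding rho_def by (auto intro!: sum_nonneg B_nonneg)
lemma sig_nonneg: "j < n \<Longrightarrow> 0 \<le> sig k j"
  unfolding sig_def by (auto intro!: sum_nonneg B_nonneg)

lemma rho_pos: "i < m \<Longrightarrow> 0 < r i \<Longrightarrow> 0 < rho k i"
  unfolding rho_eq using d0_pos d1_nonneg d1_pos by (intro mult_pos_pos rowS_pos) auto
lemma sig_pos: "j < n \<Longrightarrow> 0 < c j \<Longrightarrow> 0 < sig k j"
  unfolding sig_eq using d1_pos d0_nonneg d0_pos by (intro mult_pos_pos colS_pos) auto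

lemma row_exact: assumes "odd k" "i < m" shows "rho k i = r i"
proof -
  obtain k' where k: "k = Suc k'" "even k'" using assms(1) by (cases k) auto
  have S: "0 < r i \<Longrightarrow> 0 < (\<Sum>j<n. A i j * d1 k' j)"
    using assms d1_nonneg d1_pos by (intro rowS_pos) auto
  have S2: "r i \<noteq> 0 \<Longrightarrow> 0 < (\<Sum>j<n. A i j * d1 k' j)"
    using S r_nonneg[OF assms(2)] by linarith
  show ?thesis using step_even[OF k(2)] S2 unfolding rho_eq k
    by (cases "r i = 0") (auto simp: ipf_row_update_def)
qed

lemma col_exact: assumes "even k" "k \<noteq> 0" "j < n" shows "sig k j = c j"
proof -
  obtain k' where k: "k = Suc k'" "odd k'" using assms(1,2) by (cases k) auto
  have S: "0 < c j \<Longrightarrow> 0 < (\<Sum>i<m. A i j * d0 k' i)"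
    using assms d0_nonneg d0_pos by (intro colS_pos) auto
  have S2: "c j \<noteq> 0 \<Longrightarrow> 0 < (\<Sum>i<m. A i j * d0 k' i)"
    using S c_nonneg[OF assms(3)] by linarith
  show ?thesis using step_odd[OF k(2)] S2 unfolding sig_eq k
    by (cases "c j = 0") (auto simp: ipf_col_update_def)
qed

lemma N_c: "N = (\<Sum>j<n. c j)"
  unfolding N_def r_def c_def by (rule sum.swap)

lemma total: assumes "k \<noteq> 0" shows "(\<Sum>i<m. \<Sum>j<n. B k i j) = N"
proof (cases "odd k")
  case True
  then show ?thesis unfolding N_def using row_exact[OF True] by (simp add: rho_def)
next
  case False
  have "(\<Sum>i<m. \<Sum>j<n. B k i j) = (\<Sum>j<n. sig k j)" unfolding sig_def by (rule sum.swap)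
  also have "\<dots> = N" unfolding N_c using col_exact False assms by simp
  finally show ?thesis .
qed

lemma total_rho: "k \<noteq> 0 \<Longrightarrow> (\<Sum>i<m. rho k i) = N"
  using total by (simp add: rho_def)
lemma total_sig: "k \<noteq> 0 \<Longrightarrow> (\<Sum>j<n. sig k j) = N"
  using total by (simp add: sig_def sum.swap[of _ "{..<m}"])

lemma B_le_N: "k \<noteq> 0 \<Longrightarrow> i < m \<Longrightarrow> j < n \<Longrightarrow> B k i j \<le> N"
  using double_sum_ge[of m n "B k" i j] B_nonneg total by simp


definition feas where
  "feas Z \<longleftrightarrow> (\<forall>i<m. \<forall>j<n. 0 \<le> Z i j \<and> (0 < Z i j \<longrightarrow> 0 < A i j)) \<and>
     (\<forall>i<m. (\<Sum>j<n. Z i j) = r i) \<and> (\<forall>j<n. (\<Sum>i<m. Z i j) = c j)"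

lemma feas_Y: "feas Y"
proof -
  have "0 < A i j" if "i < m" "j < n" "0 < Y i j" for i j
    using Y_le[OF that(1,2)] that(3) by linarith
  then show ?thesis unfolding feas_def r_def c_def using Y_nonneg by blast
qed

lemma feas_pos:
  assumes "feas Z" "i < m" "j < n" "0 < Z i j"
  shows "0 < r i" "0 < c j" "0 < A i j"
proof -
  have nn: "\<And>i j. i < m \<Longrightarrow> j < n \<Longrightarrow> 0 \<le> Z i j" using assms(1) unfolding feas_def by blast
  have "Z i j \<le> (\<Sum>j<n. Z i j)" using assms nn by (intro member_le_sum) auto
  then show "0 < r i" using assms unfolding feas_def by auto
  have "Z i j \<le> (\<Sum>i<m. Z i j)" using assms nn by (intro member_le_sum) auto
  then show "0 < c j" using assms unfolding feas_def by auto
  show "0 < A i j" using assms unfolding feas_def by auto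
qed

lemma feas_nonneg: "feas Z \<Longrightarrow> i < m \<Longrightarrow> j < n \<Longrightarrow> 0 \<le> Z i j"
  unfolding feas_def by blast

lemma B_pos: "feas Z \<Longrightarrow> i < m \<Longrightarrow> j < n \<Longrightarrow> 0 < Z i j \<Longrightarrow> 0 < B k i j"
  using feas_pos[of Z i j] d0_pos[of i] d1_pos[of j] by (simp add: B_eq)

definition G where "G k = (\<Sum>i<m. r i * ln (d0 k i)) + (\<Sum>j<n. c j * ln (d1 k j))"

lemma FZ:
  assumes "feas Z"
  shows "(\<Sum>i<m. \<Sum>j<n. Z i j * ln (B k i j)) = G k + (\<Sum>i<m. \<Sum>j<n. Z i j * ln (A i j))"
proof -
  have t: "Z i j * ln (B k i j) = Z i j * ln (d0 k i) + Z i j * ln (d1 k j) + Z i j * ln (A i j)"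
    if "i < m" "j < n" for i j
  proof (cases "Z i j = 0")
    case True then show ?thesis by simp
  next
    case False
    then have "0 < Z i j" using feas_nonneg[OF assms that] by simp
    then have p: "0 < d0 k i" "0 < d1 k j" "0 < A i j"
      using feas_pos[OF assms that] d0_pos d1_pos that by auto
    then show ?thesis by (simp add: B_eq ln_mult_pos algebra_simps)
  qed
  have e1: "(\<Sum>i<m. \<Sum>j<n. Z i j * ln (B k i j)) = (\<Sum>i<m. \<Sum>j<n. Z i j * ln (d0 k i) + Z i j * ln (d1 k j) + Z i j * ln (A i j))"
    by (intro sum.cong refl) (simp add: t)
  have e2: "(\<Sum>i<m. \<Sum>j<n. Z i j * ln (d0 k i) + Z i j * ln (d1 k j) + Z i j * ln (A i j))
     = (\<Sum>i<m. \<Sum>j<n. Z i j * ln (d0 k i)) + (\<Sum>i<m. \<Sum>j<n. Z i j * ln (d1 k j)) + (\<Sum>i<m. \<Sum>j<n. Z i j * ln (A i j))"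
    by (simp add: sum.distrib)
  have e3: "(\<Sum>i<m. \<Sum>j<n. Z i j * ln (d0 k i)) = (\<Sum>i<m. r i * ln (d0 k i))"
    using assms unfolding feas_def by (intro sum.cong refl) (simp add: sum_distrib_right[symmetric])
  have e4: "(\<Sum>i<m. \<Sum>j<n. Z i j * ln (d1 k j)) = (\<Sum>j<n. c j * ln (d1 k j))"
    using assms unfolding feas_def
    by (subst sum.swap) (intro sum.cong refl, simp add: sum_distrib_right[symmetric])
  show ?thesis unfolding G_def using e1 e2 e3 e4 by linarith
qed

definition D where "D Z k = (\<Sum>i<m. \<Sum>j<n. phi (Z i j) (B k i j))"
definition CC where
  "CC Z = (\<Sum>i<m. \<Sum>j<n. Z i j * ln (Z i j)) - (\<Sum>i<m. \<Sum>j<n. Z i j * ln (A i j))"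

lemma feas_total: "feas Z \<Longrightarrow> (\<Sum>i<m. \<Sum>j<n. Z i j) = N"
  unfolding feas_def N_def by simp

lemma D_eq: assumes "feas Z" "k \<noteq> 0" shows "D Z k = CC Z - G k"
proof -
  have "D Z k = (\<Sum>i<m. \<Sum>j<n. Z i j * ln (Z i j) - Z i j * ln (B k i j) - Z i j + B k i j)"
    unfolding D_def phi_def by (intro sum.cong refl) (simp add: algebra_simps)
  also have "\<dots> = (\<Sum>i<m. \<Sum>j<n. Z i j * ln (Z i j)) - (\<Sum>i<m. \<Sum>j<n. Z i j * ln (B k i j))
      - (\<Sum>i<m. \<Sum>j<n. Z i j) + (\<Sum>i<m. \<Sum>j<n. B k i j)"
    by (simp add: sum.distrib sum_subtractf)
  finally show ?thesis using FZ[OF assms(1), of k] feas_total[OF assms(1)] total[OF assms(2)]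
    unfolding CC_def by linarith
qed

lemma D_term_nonneg: "feas Z \<Longrightarrow> i < m \<Longrightarrow> j < n \<Longrightarrow> 0 \<le> phi (Z i j) (B k i j)"
  using feas_nonneg B_nonneg B_pos by (intro phi_nonneg) auto

lemma D_nonneg: "feas Z \<Longrightarrow> 0 \<le> D Z k"
  unfolding D_def using D_term_nonneg by (auto intro!: sum_nonneg)

lemma D_bound:
  assumes "feas Z" "i < m" "j < n"
  shows "(sqrt (Z i j) - sqrt (B k i j))^2 \<le> D Z k"
proof -
  have "(sqrt (Z i j) - sqrt (B k i j))^2 \<le> phi (Z i j) (B k i j)"
    using assms feas_nonneg B_nonneg B_pos by (intro phi_ge) auto
  also have "\<dots> \<le> D Z k" unfolding D_def
    using double_sum_ge[of m n "\<lambda>i j. phi (Z i j) (B k i j)" i j] D_term_nonneg[OF assms(1)] assms by simp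
  finally show ?thesis .
qed

lemma inc_even: assumes "even k" "k \<noteq> 0" shows "G (Suc k) - G k = (\<Sum>i<m. phi (r i) (rho k i))"
proof -
  have t: "r i * ln (d0 (Suc k) i) - r i * ln (d0 k i) = phi (r i) (rho k i) - rho k i + r i"
    if i: "i < m" for i
  proof (cases "r i = 0")
    case True then show ?thesis by simp
  next
    case False
    then have rp: "0 < r i" using r_nonneg[OF i] by simp
    define S where "S = (\<Sum>j<n. A i j * d1 k j)"
    have S: "0 < S" unfolding S_def using i rp d1_nonneg d1_pos by (intro rowS_pos) auto
    have d: "0 < d0 k i" using d0_pos i rp by auto
    have "d0 (Suc k) i = r i / S" using step_even[OF assms(1)] False by (simp add: ipf_row_update_def S_def)
    moreover have "rho k i = d0 k i * S" by (simp add: rho_eq S_def)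
    ultimately show ?thesis using S d rp by (simp add: phi_def ln_divide_pos ln_mult_pos algebra_simps)
  qed
  have "G (Suc k) - G k = (\<Sum>i<m. r i * ln (d0 (Suc k) i) - r i * ln (d0 k i))"
    unfolding G_def using step_even[OF assms(1)] by (simp add: sum_subtractf)
  also have "\<dots> = (\<Sum>i<m. phi (r i) (rho k i) - rho k i + r i)" by (intro sum.cong refl) (simp add: t)
  also have "\<dots> = (\<Sum>i<m. phi (r i) (rho k i)) - (\<Sum>i<m. rho k i) + (\<Sum>i<m. r i)"
    by (simp add: sum.distrib sum_subtractf)
  also have "\<dots> = (\<Sum>i<m. phi (r i) (rho k i))" using total_rho[OF assms(2)] N_def by simp
  finally show ?thesis .
qed

lemma inc_odd: assumes "odd k" shows "G (Suc k) - G k = (\<Sum>j<n. phi (c j) (sig k j))"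
proof -
  have k0: "k \<noteq> 0" using assms by (cases k) auto
  have t: "c j * ln (d1 (Suc k) j) - c j * ln (d1 k j) = phi (c j) (sig k j) - sig k j + c j"
    if j: "j < n" for j
  proof (cases "c j = 0")
    case True then show ?thesis by simp
  next
    case False
    then have cp: "0 < c j" using c_nonneg[OF j] by simp
    define S where "S = (\<Sum>i<m. A i j * d0 k i)"
    have S: "0 < S" unfolding S_def using j cp d0_nonneg d0_pos by (intro colS_pos) auto
    have d: "0 < d1 k j" using d1_pos j cp by auto
    have "d1 (Suc k) j = c j / S" using step_odd[OF assms(1)] False by (simp add: ipf_col_update_def S_def)
    moreover have "sig k j = d1 k j * S" by (simp add: sig_eq S_def)
    ultimately show ?thesis using S d cp by (simp add: phi_def ln_divide_pos ln_mult_pos algebra_simps)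
  qed
  have "G (Suc k) - G k = (\<Sum>j<n. c j * ln (d1 (Suc k) j) - c j * ln (d1 k j))"
    unfolding G_def using step_odd[OF assms(1)] by (simp add: sum_subtractf)
  also have "\<dots> = (\<Sum>j<n. phi (c j) (sig k j) - sig k j + c j)" by (intro sum.cong refl) (simp add: t)
  also have "\<dots> = (\<Sum>j<n. phi (c j) (sig k j)) - (\<Sum>j<n. sig k j) + (\<Sum>j<n. c j)"
    by (simp add: sum.distrib sum_subtractf)
  also have "\<dots> = (\<Sum>j<n. phi (c j) (sig k j))" using total_sig[OF k0] N_c by simp
  finally show ?thesis .
qed

lemma phi_r_nonneg: "i < m \<Longrightarrow> 0 \<le> phi (r i) (rho k i)"
  using r_nonneg rho_nonneg rho_pos by (intro phi_nonneg) auto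
lemma phi_c_nonneg: "j < n \<Longrightarrow> 0 \<le> phi (c j) (sig k j)"
  using c_nonneg sig_nonneg sig_pos by (intro phi_nonneg) auto

lemma inc_nonneg: assumes "k \<noteq> 0" shows "0 \<le> G (Suc k) - G k"
proof (cases "even k")
  case True then show ?thesis using inc_even[OF True assms] phi_r_nonneg by (auto intro!: sum_nonneg)
next
  case False then show ?thesis using inc_odd[OF False] phi_c_nonneg by (auto intro!: sum_nonneg)
qed

lemma row_bound: assumes "k \<noteq> 0" "i < m"
  shows "(sqrt (r i) - sqrt (rho k i))^2 \<le> G (Suc k) - G k"
proof (cases "even k")
  case True
  have "(sqrt (r i) - sqrt (rho k i))^2 \<le> phi (r i) (rho k i)"
    using assms r_nonneg rho_nonneg rho_pos by (intro phi_ge) auto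
  also have "\<dots> \<le> (\<Sum>i<m. phi (r i) (rho k i))"
    using assms phi_r_nonneg by (intro member_le_sum) auto
  finally show ?thesis using inc_even[OF True assms(1)] by simp
next
  case False then show ?thesis using row_exact[OF False assms(2)] inc_nonneg[OF assms(1)] by simp
qed

lemma col_bound: assumes "k \<noteq> 0" "j < n"
  shows "(sqrt (c j) - sqrt (sig k j))^2 \<le> G (Suc k) - G k"
proof (cases "even k")
  case False
  have "(sqrt (c j) - sqrt (sig k j))^2 \<le> phi (c j) (sig k j)"
    using assms c_nonneg sig_nonneg sig_pos by (intro phi_ge) auto
  also have "\<dots> \<le> (\<Sum>j<n. phi (c j) (sig k j))"
    using assms phi_c_nonneg by (intro member_le_sum) auto
  finally show ?thesis using inc_odd[OF False] by simp
next
  case True then show ?thesis using col_exact[OF True assms] inc_nonneg[OF assms(1)] by simp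
qed

lemma G_upper: assumes "k \<noteq> 0" shows "G k \<le> CC Y"
proof -
  have "D Y k = CC Y - G k" using D_eq[OF feas_Y assms] .
  moreover have "0 \<le> D Y k" using D_nonneg[OF feas_Y] .
  ultimately show ?thesis by linarith
qed

lemma G_conv: obtains g where "(\<lambda>k. G (Suc k)) \<longlonglongrightarrow> g"
proof -
  have "incseq (\<lambda>k. G (Suc k))"
    using inc_nonneg by (intro incseq_SucI) (metis diff_ge_0_iff_ge nat.distinct(1))
  moreover have "bdd_above (range (\<lambda>k. G (Suc k)))"
    using G_upper by (intro bdd_aboveI2[where M="CC Y"]) auto
  ultimately show ?thesis using LIMSEQ_incseq_SUP that by blast
qed

lemma inc_lim: "(\<lambda>k. G (Suc (Suc k)) - G (Suc k)) \<longlonglongrightarrow> 0"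
proof -
  obtain g where g: "(\<lambda>k. G (Suc k)) \<longlonglongrightarrow> g" using G_conv by blast
  have "(\<lambda>k. G (Suc (Suc k)) - G (Suc k)) \<longlonglongrightarrow> g - g"
    by (intro tendsto_diff g LIMSEQ_Suc[OF g])
  then show ?thesis by simp
qed

lemma rho_lim: assumes "i < m" shows "(\<lambda>k. rho k i) \<longlonglongrightarrow> r i"
proof -
  have "(\<lambda>k. rho (Suc k) i) \<longlonglongrightarrow> r i"
    by (rule sqrt_squeeze[OF _ _ _ inc_lim]) (use assms r_nonneg rho_nonneg row_bound in auto)
  then show ?thesis by (rule filterlim_sequentially_Suc[THEN iffD1])
qed

lemma sig_lim: assumes "j < n" shows "(\<lambda>k. sig k j) \<longlonglongrightarrow> c j"
proof -
  have "(\<lambda>k. sig (Suc k) j) \<longlonglongrightarrow> c j"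
    by (rule sqrt_squeeze[OF _ _ _ inc_lim]) (use assms c_nonneg sig_nonneg col_bound in auto)
  then show ?thesis by (rule filterlim_sequentially_Suc[THEN iffD1])
qed


lemma phi_cont:
  assumes "0 \<le> x" "y \<longlonglongrightarrow> x"
  shows "(\<lambda>k. phi x (y k)) \<longlonglongrightarrow> 0"
proof (cases "x = 0")
  case True then show ?thesis using assms by simp
next
  case False
  have "(\<lambda>k. x * (ln x - ln (y k)) - x + y k) \<longlonglongrightarrow> x * (ln x - ln x) - x + x"
    using assms False by (intro tendsto_intros) auto
  then show ?thesis by (simp add: phi_def)
qed

theorem conv: "ipf_converges m n A r c"
proof -
  have bnd: "\<bar>B (Suc k) (fst s) (snd s)\<bar> \<le> N" if "s \<in> {..<m} \<times> {..<n}" for k s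
    using that B_nonneg B_le_N by auto
  obtain \<sigma> where \<sigma>: "strict_mono \<sigma>"
    "\<forall>s\<in>{..<m} \<times> {..<n}. convergent (\<lambda>k. B (Suc (\<sigma> k)) (fst s) (snd s))"
    using finite_subseq[of "{..<m} \<times> {..<n}" "\<lambda>k s. B (Suc k) (fst s) (snd s)" N] bnd by auto
  define \<tau> where "\<tau> k = Suc (\<sigma> k)" for k
  have \<tau>: "strict_mono \<tau>" using \<sigma>(1) by (simp add: strict_mono_def \<tau>_def)
  define L where "L i j = lim (\<lambda>k. B (\<tau> k) i j)" for i j
  have BL: "(\<lambda>k. B (\<tau> k) i j) \<longlonglongrightarrow> L i j" if "i < m" "j < n" for i j
    using \<sigma>(2) that unfolding L_def \<tau>_def by (auto simp: convergent_LIMSEQ_iff)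
  have L_nonneg: "0 \<le> L i j" if "i < m" "j < n" for i j
    using BL[OF that] B_nonneg that by (intro LIMSEQ_le_const) auto
  have L_A: "0 < A i j" if "i < m" "j < n" "0 < L i j" for i j
  proof (rule ccontr)
    assume "\<not> 0 < A i j"
    then have "A i j = 0" using A_nonneg that by force
    then have "(\<lambda>k. B (\<tau> k) i j) = (\<lambda>k. 0)" by (simp add: B_eq)
    then have "L i j = 0" using BL[OF that(1,2)] LIMSEQ_unique[of "\<lambda>k. 0::real"] by auto
    with that show False by simp
  qed
  have L_row: "(\<Sum>j<n. L i j) = r i" if "i < m" for i
  proof -
    have "(\<lambda>k. \<Sum>j<n. B (\<tau> k) i j) \<longlonglongrightarrow> (\<Sum>j<n. L i j)" using BL that by (intro tendsto_sum) auto
    moreover have "(\<lambda>k. \<Sum>j<n. B (\<tau> k) i j) \<longlonglongrightarrow> r i"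
      using LIMSEQ_subseq_LIMSEQ[OF rho_lim[OF that] \<tau>] by (simp add: o_def rho_def)
    ultimately show ?thesis using LIMSEQ_unique by blast
  qed
  have L_col: "(\<Sum>i<m. L i j) = c j" if "j < n" for j
  proof -
    have "(\<lambda>k. \<Sum>i<m. B (\<tau> k) i j) \<longlonglongrightarrow> (\<Sum>i<m. L i j)" using BL that by (intro tendsto_sum) auto
    moreover have "(\<lambda>k. \<Sum>i<m. B (\<tau> k) i j) \<longlonglongrightarrow> c j"
      using LIMSEQ_subseq_LIMSEQ[OF sig_lim[OF that] \<tau>] by (simp add: o_def sig_def)
    ultimately show ?thesis using LIMSEQ_unique by blast
  qed
  have fL: "feas L" unfolding feas_def using L_nonneg L_A L_row L_col by blast
  have DL0: "(\<lambda>k. D L (\<tau> k)) \<longlonglongrightarrow> 0"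
  proof -
    have "(\<lambda>k. \<Sum>i<m. \<Sum>j<n. phi (L i j) (B (\<tau> k) i j)) \<longlonglongrightarrow> (\<Sum>i<m. \<Sum>j<n. (0::real))"
      using BL L_nonneg by (intro tendsto_sum phi_cont) auto
    then show ?thesis by (simp add: D_def)
  qed
  obtain g where g: "(\<lambda>k. G (Suc k)) \<longlonglongrightarrow> g" using G_conv by blast
  have DLs: "(\<lambda>k. D L (Suc k)) = (\<lambda>k. CC L - G (Suc k))" using D_eq[OF fL] by auto
  have DLg: "(\<lambda>k. D L (Suc k)) \<longlonglongrightarrow> CC L - g" unfolding DLs by (intro tendsto_intros g)
  have "((\<lambda>k. D L (Suc k)) \<circ> \<sigma>) \<longlonglongrightarrow> CC L - g" by (rule LIMSEQ_subseq_LIMSEQ[OF DLg \<sigma>(1)])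
  then have "(\<lambda>k. D L (\<tau> k)) \<longlonglongrightarrow> CC L - g" by (simp add: o_def \<tau>_def)
  then have "CC L - g = 0" using DL0 LIMSEQ_unique by blast
  then have DL: "(\<lambda>k. D L (Suc k)) \<longlonglongrightarrow> 0" using DLg by simp
  have lim: "(\<lambda>k. B k i j) \<longlonglongrightarrow> L i j" if "i < m" "j < n" for i j
  proof -
    have "(\<lambda>k. B (Suc k) i j) \<longlonglongrightarrow> L i j"
      by (rule sqrt_squeeze[OF _ _ _ DL]) (use that L_nonneg B_nonneg D_bound[OF fL that] in auto)
    then show ?thesis by (rule filterlim_sequentially_Suc[THEN iffD1])
  qed
  show ?thesis unfolding ipf_converges_def
    using lim L_row L_col by (intro exI[of _ L]) (auto simp: B_def)
qed

theorem conv': "ipf_converges m n A (\<lambda>i. \<Sum>j<n. Y i j) (\<lambda>j. \<Sum>i<m. Y i j)"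
  using conv unfolding r_def c_def .

end

theorem mainTheorem6:
  fixes T :: "'a set" and X :: "'a \<Rightarrow> nat \<Rightarrow> nat \<Rightarrow> real" and m n :: nat and t :: 'a
  assumes "finite T"
    and "\<And>s i j. s \<in> T \<Longrightarrow> i < m \<Longrightarrow> j < n \<Longrightarrow> X s i j \<ge> 0"
    and "t \<in> T"
  shows "ipf_converges m n (\<lambda>i j. \<Sum>s\<in>T. X s i j)
           (\<lambda>i. \<Sum>j<n. X t i j) (\<lambda>j. \<Sum>i<m. X t i j)"
proof -
  interpret ipf m n "\<lambda>i j. \<Sum>s\<in>T. X s i j" "X t"
  proof
    fix i j assume ij: "i < m" "j < n"
    show "0 \<le> X t i j" using assms(2)[OF assms(3) ij] .
    show "X t i j \<le> (\<Sum>s\<in>T. X s i j)"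
      using assms ij by (intro member_le_sum) auto
  qed
  show ?thesis by (rule conv')
qed

end
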